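(* Let $0<q<1$, $v>-1$, and let $\omega:\mathbb R\to\mathbb R$ be an even function with $\omega(q^n)\neq 0$ for all $n\in\mathbb Z$. Let $d\mu(x)=\omega(x)^2|x|^{2v+1}d_qx$, where $d_qx=(1-q)\sum_{n\in\mathbb Z}q^n\delta_{q^n}$, and assume $\mu$ has finite moments $s_n=\int x^n\,d\mu(x)$ of all orders. If $$\lim_{n\rightarrow\infty}q^{n/4}\,(s_{2n})^{1/(2n)}=0,$$ then $\mu$ is determinate.
   Context: $\delta_a$ denotes the Dirac mass at $a$. A positive measure $\mu$ on $\mathbb R$ with moments of all orders and infinite support is called determinate if it is the only positive measure on $\mathbb R$ having the same moments $s_n=\int x^n d\mu(x)$ for all $n\ge 0$. *)

theory Defs
  imports "HOL-Probability.Probability"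
begin

definition moment :: "real measure \<Rightarrow> nat \<Rightarrow> real" where
  "moment M n = (\<integral>x. x ^ n \<partial>M)"

definition has_all_moments :: "real measure \<Rightarrow> bool" where
  "has_all_moments M \<longleftrightarrow> sets M = sets borel \<and> (\<forall>n. integrable M (\<lambda>x. x ^ n))"

definition determinate :: "real measure \<Rightarrow> bool" where
  "determinate M \<longleftrightarrow> has_all_moments M \<and>
     (\<forall>N. has_all_moments N \<and> (\<forall>n. moment N n = moment M n) \<longrightarrow> N = M)"

text \<open>The measure  omega(x)^2 |x|^(2v+1) d_q x,  with
  d_q x = (1-q) sum_{n in Z} q^n delta_{q^n}.\<close>
definition q_measure :: "real \<Rightarrow> real \<Rightarrow> (real \<Rightarrow> real) \<Rightarrow> real measure" where
  "q_measure q v \<omega> =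
     distr (density (count_space (UNIV::int set))
              (\<lambda>n. ennreal ((1 - q) * q powi n * (\<omega> (q powi n))\<^sup>2 * \<bar>q powi n\<bar> powr (2 * v + 1))))
           borel (\<lambda>n. q powi n)"

end

theory Submission
  imports Defs "HOL-Computational_Algebra.Polynomial"
begin


lemma exp_le_one_minus:
  fixes a b :: real
  assumes "0 \<le> a" "a \<le> b" "b < 1"
  shows "exp (- a / (1 - b)) \<le> 1 - a"
proof -
  have y: "a / (1 - a) \<le> a / (1 - b)" using assms by (intro divide_left_mono) auto
  have "exp (- a / (1 - b)) \<le> exp (- (a / (1 - a)))" using y by simp
  also have "\<dots> = inverse (exp (a / (1 - a)))" by (simp add: exp_minus)
  also have "\<dots> \<le> inverse (1 + a / (1 - a))"
    using assms by (intro le_imp_inverse_le exp_ge_add_one_self) (auto intro: add_pos_nonneg)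
  also have "1 + a / (1 - a) = 1 / (1 - a)" using assms by (simp add: field_simps)
  finally show ?thesis by simp
qed

lemma LA:
  fixes q b :: real and T :: "nat set"
  assumes q: "0 < q" "q < 1" and b: "0 \<le> b" "b < 1" and T: "finite T"
  shows "exp (- b / ((1 - q) * (1 - b))) \<le> (\<Prod>g\<in>T. 1 - b * q ^ g)"
proof -
  have "(\<Prod>g\<in>T. exp (- (b * q ^ g) / (1 - b))) \<le> (\<Prod>g\<in>T. 1 - b * q ^ g)"
  proof (rule prod_mono, safe)
    fix g assume "g \<in> T"
    have "q ^ g \<le> 1" using q by (simp add: power_le_one)
    hence "b * q ^ g \<le> b" using b by (simp add: mult_left_le)
    thus "exp (- (b * q ^ g) / (1 - b)) \<le> 1 - b * q ^ g"
      using b q by (intro exp_le_one_minus) auto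
  qed simp
  moreover have "(\<Prod>g\<in>T. exp (- (b * q ^ g) / (1 - b))) = exp (\<Sum>g\<in>T. - (b * q ^ g) / (1 - b))"
    using T by (simp add: exp_sum)
  moreover have "(\<Sum>g\<in>T. - (b * q ^ g) / (1 - b)) = - (b / (1 - b)) * (\<Sum>g\<in>T. q ^ g)"
    by (simp add: sum_distrib_left sum_negf)
  moreover have "(\<Sum>g\<in>T. q ^ g) \<le> 1 / (1 - q)"
  proof -
    have "(\<Sum>g\<in>T. q ^ g) \<le> (\<Sum>g. q ^ g)"
      using q T by (intro sum_le_suminf) (auto intro: summable_geometric)
    thus ?thesis using q by (simp add: suminf_geometric)
  qed
  moreover have "- b / ((1 - q) * (1 - b)) \<le> - (b / (1 - b)) * (\<Sum>g\<in>T. q ^ g)"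
  proof -
    have "(b / (1 - b)) * (\<Sum>g\<in>T. q ^ g) \<le> (b / (1 - b)) * (1 / (1 - q))"
      using calculation(4) b by (intro mult_left_mono) auto
    thus ?thesis using b q by (simp add: field_simps)
  qed
  ultimately show ?thesis by (metis exp_le_cancel_iff order_trans)
qed



lemma prod_split_lb:
  fixes q b1 b2 :: real and E :: "int set" and F :: "int \<Rightarrow> real" and ga gb :: "int \<Rightarrow> nat" and P :: "int \<Rightarrow> bool"
  assumes q: "0 < q" "q < 1" and b: "0 \<le> b1" "b1 < 1" "0 \<le> b2" "b2 < 1" and E: "finite E"
    and inj1: "inj_on ga {e\<in>E. P e}" and inj2: "inj_on gb {e\<in>E. \<not> P e}"
    and h1: "\<And>e. e \<in> E \<Longrightarrow> P e \<Longrightarrow> 1 - b1 * q ^ ga e \<le> F e"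
    and h2: "\<And>e. e \<in> E \<Longrightarrow> \<not> P e \<Longrightarrow> 1 - b2 * q ^ gb e \<le> F e"
  shows "exp (- b1 / ((1 - q) * (1 - b1))) * exp (- b2 / ((1 - q) * (1 - b2))) \<le> (\<Prod>e\<in>E. F e)"
proof -
  define h where "h e = (if P e then 1 - b1 * q ^ ga e else 1 - b2 * q ^ gb e)" for e
  have hpos: "0 \<le> h e" for e
  proof -
    have "q ^ n \<le> 1" for n using q by (simp add: power_le_one)
    hence "b1 * q ^ ga e \<le> 1" "b2 * q ^ gb e \<le> 1" using b
      by (meson less_eq_real_def mult_le_one q(1) zero_le_power)+
    thus ?thesis by (simp add: h_def)
  qed
  have "(\<Prod>e\<in>E. h e) \<le> (\<Prod>e\<in>E. F e)"
    by (rule prod_mono) (use hpos h1 h2 in \<open>auto simp: h_def\<close>)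
  moreover have "(\<Prod>e\<in>E. h e) = (\<Prod>e\<in>{e\<in>E. P e}. h e) * (\<Prod>e\<in>{e\<in>E. \<not> P e}. h e)"
  proof -
    have "E = {e\<in>E. P e} \<union> {e\<in>E. \<not> P e}" by auto
    thus ?thesis using E by (metis (no_types, lifting) prod.union_disjoint disjoint_iff finite_Un mem_Collect_eq)
  qed
  moreover have "(\<Prod>e\<in>{e\<in>E. P e}. h e) = (\<Prod>g\<in>ga ` {e\<in>E. P e}. 1 - b1 * q ^ g)"
    using inj1 by (simp add: prod.reindex h_def)
  moreover have "(\<Prod>e\<in>{e\<in>E. \<not> P e}. h e) = (\<Prod>g\<in>gb ` {e\<in>E. \<not> P e}. 1 - b2 * q ^ g)"
    using inj2 by (simp add: prod.reindex h_def)
  moreover have "exp (- b1 / ((1 - q) * (1 - b1))) \<le> (\<Prod>g\<in>ga ` {e\<in>E. P e}. 1 - b1 * q ^ g)"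
    using E by (intro LA q b) auto
  moreover have "exp (- b2 / ((1 - q) * (1 - b2))) \<le> (\<Prod>g\<in>gb ` {e\<in>E. \<not> P e}. 1 - b2 * q ^ g)"
    using E by (intro LA q b) auto
  ultimately show ?thesis
    by (smt (verit) exp_gt_zero mult_mono)
qed

definition Pf :: "real \<Rightarrow> int set \<Rightarrow> real \<Rightarrow> real" where
  "Pf q E x = (\<Prod>e\<in>E. 1 - x * q powi e)"

definition Lam :: "real \<Rightarrow> real set" where
  "Lam q = range (\<lambda>l::int. q powi l)"

lemma aux1: "(u::real) > 0 \<Longrightarrow> 1 / u - 1 - (1 - u) = (1 - u)\<^sup>2 / u"
  by (simp add: field_simps power2_eq_square)

lemma LH:
  fixes q :: real and j :: int
  assumes q: "0 < q" "q < 1" and E: "finite E" "- j \<notin> E"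
  shows "exp (- q / ((1 - q) * (1 - q))) * exp (- q / ((1 - q) * (1 - q))) \<le> \<bar>Pf q E (q powi j)\<bar>"
proof -
  have "\<bar>Pf q E (q powi j)\<bar> = (\<Prod>e\<in>E. \<bar>1 - q powi (j + e)\<bar>)"
    unfolding Pf_def using q by (simp add: abs_prod power_int_add)
  moreover have "exp (- q / ((1 - q) * (1 - q))) * exp (- q / ((1 - q) * (1 - q))) \<le> (\<Prod>e\<in>E. \<bar>1 - q powi (j + e)\<bar>)"
  proof (rule prod_split_lb[where P = "\<lambda>e. j + e > 0" and ga = "\<lambda>e. nat (j + e) - 1"
        and gb = "\<lambda>e. nat (- (j + e)) - 1"])
    show "inj_on (\<lambda>e. nat (j + e) - 1) {e \<in> E. 0 < j + e}" unfolding inj_on_def by auto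
    show "inj_on (\<lambda>e. nat (- (j + e)) - 1) {e \<in> E. \<not> 0 < j + e}"
    proof (rule inj_onI)
      fix x y assume a: "x \<in> {e \<in> E. \<not> 0 < j + e}" "y \<in> {e \<in> E. \<not> 0 < j + e}"
        "nat (- (j + x)) - 1 = nat (- (j + y)) - 1"
      have "x \<noteq> - j" "y \<noteq> - j" using a E(2) by auto
      hence "j + x < 0" "j + y < 0" using a by auto
      thus "x = y" using a(3) by linarith
    qed
  next
    fix e assume "e \<in> E" "0 < j + e"
    hence "j + e = int (Suc (nat (j + e) - 1))" by simp
    hence "q powi (j + e) = q * q ^ (nat (j + e) - 1)"
      by (metis power_int_of_nat power_Suc)
    moreover have "q powi (j + e) \<le> 1" using q \<open>0 < j + e\<close> by (intro power_int_le_one) auto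
    ultimately show "1 - q * q ^ (nat (j + e) - 1) \<le> \<bar>1 - q powi (j + e)\<bar>" by simp
  next
    fix e assume e: "e \<in> E" "\<not> 0 < j + e"
    have "e \<noteq> - j" using e E(2) by auto
    hence ne: "j + e < 0" using e by auto
    define n where "n = nat (- (j + e))"
    have n: "n \<ge> 1" "j + e = - int n" using ne by (auto simp: n_def)
    have qn: "q ^ n \<le> 1" "0 < q ^ n" using q by (auto simp: power_le_one)
    have "q powi (j + e) = 1 / q ^ n" using n by (simp add: power_int_minus_divide)
    moreover have "q * q ^ (n - 1) = q ^ n"
    proof -
      have "n = Suc (n - 1)" using n by simp
      thus ?thesis by (metis power_Suc)
    qed
    moreover have "1 - q ^ n \<le> 1 / q ^ n - 1"
    proof -
      have "1 / q ^ n - 1 - (1 - q ^ n) = (1 - q ^ n)\<^sup>2 / q ^ n"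
        by (rule aux1[OF qn(2)])
      moreover have "0 \<le> (1 - q ^ n)\<^sup>2 / q ^ n" using qn by simp
      ultimately show ?thesis by linarith
    qed
    moreover have "1 \<le> 1 / q ^ n" using qn by simp
    ultimately show "1 - q * q ^ (nat (- (j + e)) - 1) \<le> \<bar>1 - q powi (j + e)\<bar>"
      unfolding n_def[symmetric] by simp
  qed (use q E in auto)
  ultimately show ?thesis by simp
qed



lemma aux2: "(u::real) > 0 \<Longrightarrow> (u - 1) - (1 - 1 / u) = (1 - u)\<^sup>2 / u"
  by (simp add: field_simps power2_eq_square)

lemma floor_powr_bounds:
  fixes q x :: real
  assumes q: "0 < q" "q < 1" and x: "0 < x" "x \<notin> Lam q"
  obtains k :: int where "q powi (k + 1) < x" "x < q powi k"
proof -
  define r where "r = log q x"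
  have xr: "x = q powr r" using q x by (simp add: r_def)
  define k where "k = \<lfloor>r\<rfloor>"
  have "q powr (real_of_int k + 1) < q powr r" using q by (intro powr_less_mono') (auto simp: k_def)
  hence 1: "q powi (k + 1) < x" using q xr by (simp add: powr_real_of_int'[symmetric])
  have "q powr r \<le> q powr (real_of_int k)" using q by (intro powr_mono') (auto simp: k_def)
  hence "x \<le> q powi k" using q xr by (simp add: powr_real_of_int'[symmetric])
  moreover have "x \<noteq> q powi k" using x(2) by (auto simp: Lam_def)
  ultimately have "x < q powi k" by simp
  with 1 show ?thesis using that by blast
qed

lemma LB:
  fixes q x :: real
  assumes q: "0 < q" "q < 1" and x: "x \<notin> Lam q"
  shows "\<exists>c>0. \<forall>E. finite E \<longrightarrow> c \<le> \<bar>Pf q E x\<bar>"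
proof (cases "x \<le> 0")
  case True
  have "1 \<le> \<bar>Pf q E x\<bar>" for E
  proof -
    have "1 \<le> Pf q E x" unfolding Pf_def
      by (rule prod_ge_1) (use True q in \<open>auto simp: mult_nonpos_nonneg\<close>)
    thus ?thesis by simp
  qed
  thus ?thesis by (intro exI[of _ 1]) auto
next
  case False
  hence xpos: "0 < x" by simp
  obtain k :: int where k: "q powi (k + 1) < x" "x < q powi k"
    using floor_powr_bounds[OF q xpos x] by blast
  define y where "y = x / q powi k"
  have qk: "0 < q powi k" using q by simp
  have y: "q < y" "y < 1" "0 < y"
  proof -
    have "q powi (k + 1) = q powi k * q" using q by (simp add: power_int_add)
    thus "q < y" "y < 1" "0 < y" using k qk xpos by (auto simp: y_def field_simps)
  qed
  define c where "c = exp (- y / ((1 - q) * (1 - y))) * exp (- (q / y) / ((1 - q) * (1 - q / y)))"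
  have "c \<le> \<bar>Pf q E x\<bar>" if E: "finite E" for E
  proof -
    have "\<bar>Pf q E x\<bar> = (\<Prod>e\<in>E. \<bar>1 - y * q powi (e + k)\<bar>)"
    proof -
      have "x * q powi e = y * q powi (e + k)" for e
        using q qk by (simp add: y_def power_int_add)
      thus ?thesis unfolding Pf_def by (simp add: abs_prod)
    qed
    moreover have "c \<le> (\<Prod>e\<in>E. \<bar>1 - y * q powi (e + k)\<bar>)"
      unfolding c_def
    proof (rule prod_split_lb[where P = "\<lambda>e. e + k \<ge> 0" and ga = "\<lambda>e. nat (e + k)"
        and gb = "\<lambda>e. nat (- (e + k)) - 1"])
      show "inj_on (\<lambda>e. nat (e + k)) {e \<in> E. 0 \<le> e + k}" unfolding inj_on_def by auto
      show "inj_on (\<lambda>e. nat (- (e + k)) - 1) {e \<in> E. \<not> 0 \<le> e + k}"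
        unfolding inj_on_def by auto
    next
      fix e assume "e \<in> E" "0 \<le> e + k"
      hence eq: "q powi (e + k) = q ^ nat (e + k)" by (simp add: power_int_nonneg_exp)
      have "q ^ nat (e + k) \<le> 1" using q by (simp add: power_le_one)
      hence "y * q ^ nat (e + k) \<le> 1" using y q by (intro mult_le_one) auto
      thus "1 - y * q ^ nat (e + k) \<le> \<bar>1 - y * q powi (e + k)\<bar>" using eq by simp
    next
      fix e assume e: "e \<in> E" "\<not> 0 \<le> e + k"
      define n where "n = nat (- (e + k))"
      have n: "n \<ge> 1" "e + k = - int n" using e by (auto simp: n_def)
      have qn: "q ^ n \<le> q" "0 < q ^ n"
        using q n by (auto simp: power_le_one intro: power_decreasing[of 1 n q, simplified])
      define u where "u = y / q ^ n"
      have u1: "1 < u" using qn y by (simp add: u_def field_simps)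
      have "y * q powi (e + k) = u" using n by (simp add: power_int_minus_divide u_def)
      moreover have "q / y * q ^ (n - 1) = 1 / u"
      proof -
        have "n = Suc (n - 1)" using n by simp
        hence "q * q ^ (n - 1) = q ^ n" by (metis power_Suc)
        thus ?thesis using y qn by (simp add: u_def field_simps)
      qed
      moreover have "1 - 1 / u \<le> u - 1"
        using aux2[of u] u1 by (smt (verit) divide_nonneg_pos zero_le_power2)
      ultimately show "1 - q / y * q ^ (nat (- (e + k)) - 1) \<le> \<bar>1 - y * q powi (e + k)\<bar>"
        unfolding n_def[symmetric] using u1 by simp
    qed (use q y E in auto)
    ultimately show ?thesis by simp
  qed
  moreover have "0 < c" by (simp add: c_def)
  ultimately show ?thesis by blast
qed



lemma integrable_poly:
  assumes "\<And>n. integrable A (\<lambda>x. x ^ n)"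
  shows "integrable A (\<lambda>x. poly p (x::real))"
  unfolding poly_altdef by (intro Bochner_Integration.integrable_sum integrable_mult_right assms)

lemma integral_poly_eq:
  assumes "\<And>n. integrable A (\<lambda>x. x ^ n)" "\<And>n. integrable B (\<lambda>x. x ^ n)"
    "\<And>n. moment A n = moment B n"
  shows "(\<integral>x. poly p (x::real) \<partial>A) = (\<integral>x. poly p x \<partial>B)"
proof -
  have "(\<integral>x. poly p (x::real) \<partial>A) = (\<Sum>i\<le>degree p. coeff p i * moment A i)"
    unfolding poly_altdef moment_def
    by (subst Bochner_Integration.integral_sum) (auto intro: integrable_mult_right assms)
  also have "\<dots> = (\<Sum>i\<le>degree p. coeff p i * moment B i)" using assms(3) by simp
  also have "\<dots> = (\<integral>x. poly p (x::real) \<partial>B)"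
    unfolding poly_altdef moment_def
    by (subst Bochner_Integration.integral_sum) (auto intro: integrable_mult_right assms)
  finally show ?thesis .
qed

lemma Pf_poly: "Pf q E x = poly (\<Prod>e\<in>E. [:1, - (q powi e):]) x"
  unfolding Pf_def by (simp add: poly_prod)

lemma Pf2_poly: "(Pf q E x)\<^sup>2 = poly ((\<Prod>e\<in>E. [:1, - (q powi e):]) ^ 2) x"
  unfolding Pf_poly by simp

lemma Pf_measurable[measurable]: "(\<lambda>x. Pf q E x) \<in> borel_measurable borel"
  unfolding Pf_def by measurable

lemma finite_of_moments:
  assumes "\<And>n. integrable A (\<lambda>x. (x::real) ^ n)"
  shows "finite_measure A"
proof
  have "integrable A (\<lambda>x. 1::real)" using assms[of 0] by simp
  hence "(\<integral>\<^sup>+x. ennreal (norm (1::real)) \<partial>A) < \<infinity>" by (simp add: integrable_iff_bounded)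
  thus "emeasure A (space A) \<noteq> \<infinity>" by simp
qed

lemma nn_integral_Pf2_eq:
  assumes "\<And>n. integrable A (\<lambda>x. x ^ n)" "\<And>n. integrable B (\<lambda>x. x ^ n)"
    "\<And>n. moment A n = moment B n"
  shows "(\<integral>\<^sup>+x. ennreal ((Pf q E x)\<^sup>2) \<partial>A) = (\<integral>\<^sup>+x. ennreal ((Pf q E x)\<^sup>2) \<partial>B)"
proof -
  have "(\<integral>\<^sup>+x. ennreal ((Pf q E x)\<^sup>2) \<partial>A) = ennreal (\<integral>x. (Pf q E x)\<^sup>2 \<partial>A)"
    unfolding Pf2_poly by (intro nn_integral_eq_integral integrable_poly assms) (auto simp: Pf2_poly[symmetric])
  also have "(\<integral>x. (Pf q E x)\<^sup>2 \<partial>A) = (\<integral>x. (Pf q E x)\<^sup>2 \<partial>B)"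
    unfolding Pf2_poly by (intro integral_poly_eq assms)
  also have "ennreal (\<integral>x. (Pf q E x)\<^sup>2 \<partial>B) = (\<integral>\<^sup>+x. ennreal ((Pf q E x)\<^sup>2) \<partial>B)"
    unfolding Pf2_poly by (intro nn_integral_eq_integral[symmetric] integrable_poly assms) (auto simp: Pf2_poly[symmetric])
  finally show ?thesis .
qed

lemma sum_E0:
  "(\<Sum>e\<in>{- int m..4 * int m}. real_of_int e) = (15 * real m ^ 2 + 3 * real m) / 2"
proof -
  have "{- int m..4 * int m} = (\<lambda>k. int k - int m) ` {0..5*m}"
  proof (rule set_eqI, rule iffI)
    fix e assume "e \<in> {- int m..4 * int m}"
    hence "e = int (nat (e + int m)) - int m" "nat (e + int m) \<in> {0..5*m}" by auto
    thus "e \<in> (\<lambda>k. int k - int m) ` {0..5*m}" by blast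
  qed auto
  moreover have "inj_on (\<lambda>k. int k - int m) {0..5*m}" by (auto simp: inj_on_def)
  ultimately have "(\<Sum>e\<in>{- int m..4 * int m}. real_of_int e) = (\<Sum>k\<in>{0..5*m}. real k - real m)"
    by (simp add: sum.reindex)
  also have "\<dots> = (\<Sum>k\<in>{0..5*m}. real k) - real (5*m+1) * real m"
    by (simp add: sum_subtractf)
  also have "2 * (\<Sum>k\<in>{0..5*m}. real k) = real (5*m) * (real (5*m) + 1)"
    by (rule double_gauss_sum)
  hence "(\<Sum>k\<in>{0..5*m}. real k) = real (5*m) * (real (5*m) + 1) / 2" by simp
  finally show ?thesis by (simp add: field_simps power2_eq_square)
qed



lemma Pf_small:
  assumes q: "0 < q" "q < 1" and E: "E \<subseteq> {- int m..4 * int m}" and l: "l \<ge> int m + 1"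
  shows "0 \<le> Pf q E (q powi l)" "Pf q E (q powi l) \<le> 1"
proof -
  have fac: "0 \<le> 1 - q powi l * q powi e \<and> 1 - q powi l * q powi e \<le> 1" if "e \<in> E" for e
  proof -
    have "l + e > 0" using that E l by auto
    hence "q powi (l + e) \<le> 1" using q by (intro power_int_le_one) auto
    moreover have "q powi l * q powi e = q powi (l + e)" using q by (simp add: power_int_add)
    moreover have "0 < q powi (l + e)" using q by simp
    ultimately show ?thesis by simp
  qed
  show "0 \<le> Pf q E (q powi l)" unfolding Pf_def using fac by (intro prod_nonneg) auto
  show "Pf q E (q powi l) \<le> 1" unfolding Pf_def using fac by (intro prod_le_1) auto
qed

lemma Pf_big:
  fixes T m :: nat
  assumes q: "0 < q" "q < 1" and E: "E \<subseteq> {- int m..4 * int m}" and T: "T \<ge> 4 * m + 1"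
  shows "\<bar>Pf q E (q powi (- int T))\<bar> \<le> q powr ((15 * real m ^ 2 + 3 * real m) / 2 - real (5 * m + 1) * real T)"
proof -
  let ?E0 = "{- int m..4 * int m}"
  have ge1: "1 \<le> q powi (e - int T)" if "e \<in> ?E0" for e
    using that T q power_int_decreasing[of "e - int T" 0 q] by auto
  have "\<bar>Pf q E (q powi (- int T))\<bar> = (\<Prod>e\<in>E. \<bar>1 - q powi (e - int T)\<bar>)"
    unfolding Pf_def using q by (simp add: abs_prod power_int_add[symmetric] algebra_simps)
  also have "\<dots> \<le> (\<Prod>e\<in>E. q powi (e - int T))"
  proof (rule prod_mono, safe)
    fix e assume "e \<in> E"
    hence "1 \<le> q powi (e - int T)" using E ge1 by auto
    thus "0 \<le> \<bar>1 - q powi (e - int T)\<bar>" "\<bar>1 - q powi (e - int T)\<bar> \<le> q powi (e - int T)" by auto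
  qed
  also have "\<dots> \<le> (\<Prod>e\<in>?E0. q powi (e - int T))"
  proof -
    have "(\<Prod>e\<in>?E0. q powi (e - int T)) = (\<Prod>e\<in>E. q powi (e - int T)) * (\<Prod>e\<in>?E0 - E. q powi (e - int T))"
      using E by (metis (no_types, lifting) finite_atLeastAtMost_int mult.commute prod.subset_diff)
    moreover have "1 \<le> (\<Prod>e\<in>?E0 - E. q powi (e - int T))" using ge1 by (intro prod_ge_1) auto
    moreover have "0 \<le> (\<Prod>e\<in>E. q powi (e - int T))" using q by (intro prod_nonneg) auto
    ultimately show ?thesis by (simp add: mult_le_cancel_left1)
  qed
  also have "\<dots> = (\<Prod>e\<in>?E0. q powr (real_of_int e - real T))"
    using q by (intro prod.cong refl) (simp add: powr_real_of_int'[symmetric])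
  also have "\<dots> = q powr (\<Sum>e\<in>?E0. (real_of_int e - real T))"
    using q by (simp add: powr_sum)
  also have "(\<Sum>e\<in>?E0. (real_of_int e - real T)) = (15 * real m ^ 2 + 3 * real m) / 2 - real (5 * m + 1) * real T"
    by (simp add: sum_subtractf sum_E0)
  finally show ?thesis .
qed



lemma pt_mass:
  fixes A :: "real measure"
  assumes fin: "finite_measure A" and sA: "sets A = sets borel" and int: "\<And>n. integrable A (\<lambda>x. x ^ n)"
  shows "c ^ (2 * k) * measure A {c} \<le> moment A (2 * k)"
proof -
  have nn: "0 \<le> x ^ (2 * k)" for x :: real by (simp add: power_mult)
  have "ennreal (c ^ (2 * k) * measure A {c}) = (\<integral>\<^sup>+x. ennreal (x ^ (2 * k)) * indicator {c} x \<partial>A)"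
    using sA fin nn by (simp add: finite_measure.emeasure_eq_measure ennreal_mult)
  also have "\<dots> \<le> (\<integral>\<^sup>+x. ennreal (x ^ (2 * k)) \<partial>A)"
    by (intro nn_integral_mono) (auto simp: indicator_def)
  also have "\<dots> = ennreal (moment A (2 * k))"
    unfolding moment_def using nn by (intro nn_integral_eq_integral int) auto
  finally show ?thesis using nn by (subst (asm) ennreal_le_iff) (auto simp: moment_def intro: integral_nonneg)
qed

lemma int_ineq:
  fixes m T :: real
  assumes "m \<ge> 1" "T \<ge> 4 * m + 1"
  shows "T \<le> 2 * ((15 * m ^ 2 + 3 * m) / 2 - (5 * m + 1) * T) + 2 * T ^ 2"
proof -
  define t where "t = T - 4 * m - 1"
  have t: "t \<ge> 0" using assms by (simp add: t_def)
  have "2 * ((15 * m ^ 2 + 3 * m) / 2 - (5 * m + 1) * T) + 2 * T ^ 2 - T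
        = 7 * m ^ 2 - 3 * m - 1 + (6 * m + 1) * t + 2 * t ^ 2"
    by (simp add: t_def power2_eq_square algebra_simps)
  moreover have "7 * m ^ 2 - 3 * m - 1 \<ge> 0"
  proof -
    have "7 * m ^ 2 \<ge> 7 * m" using assms by (simp add: power2_eq_square)
    thus ?thesis using assms by simp
  qed
  moreover have "(6 * m + 1) * t \<ge> 0" using assms t by simp
  moreover have "2 * t ^ 2 \<ge> 0" by simp
  ultimately show ?thesis by linarith
qed

lemma big_term:
  fixes A :: "real measure" and q :: real and m t0 T :: nat and E :: "int set"
  assumes q: "0 < q" "q < 1"
  and fin: "finite_measure A" and sA: "sets A = sets borel" and int: "\<And>n. integrable A (\<lambda>x. x ^ n)"
  and hyp: "\<And>t. t \<ge> t0 \<Longrightarrow> moment A (4 * t) * q ^ (2 * t^2) \<le> 1"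
  and m: "m \<ge> 1" and T: "T \<ge> 4 * m + 1" "T \<ge> t0"
  and E: "E \<subseteq> {- int m..4 * int m}"
  shows "(Pf q E (q powi (- int T)))\<^sup>2 * measure A {q powi (- int T)} \<le> q ^ T"
proof -
  define X where "X = (15 * real m ^ 2 + 3 * real m) / 2 - real (5 * m + 1) * real T"
  define pt where "pt = q powi (- int T)"
  define a where "a = measure A {pt}"
  have a0: "0 \<le> a" by (simp add: a_def)
  have P: "(Pf q E pt)\<^sup>2 \<le> (q powr X)\<^sup>2"
  proof -
    have "\<bar>Pf q E pt\<bar> \<le> q powr X" unfolding pt_def X_def by (rule Pf_big[OF q E T(1)])
    hence "\<bar>Pf q E pt\<bar>\<^sup>2 \<le> (q powr X)\<^sup>2" by (intro power_mono) auto
    thus ?thesis by simp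
  qed
  have ptpow: "pt ^ (4 * T) = 1 / q ^ (4 * T ^ 2)"
  proof -
    have e: "T * (4 * T) = 4 * T ^ 2" by (simp add: power2_eq_square)
    have "pt ^ (4 * T) = 1 / q ^ (T * (4 * T))"
      unfolding pt_def using q by (simp add: power_int_minus_divide power_divide power_mult[symmetric])
    thus ?thesis by (simp only: e)
  qed
  have "pt ^ (4 * T) * a \<le> moment A (4 * T)"
    using pt_mass[OF fin sA int, of pt "2 * T"] by (simp add: a_def)
  moreover have "a = (pt ^ (4 * T) * a) * q ^ (4 * T ^ 2)"
    using q by (simp add: ptpow)
  ultimately have "a \<le> moment A (4 * T) * q ^ (4 * T ^ 2)"
    using q by (metis mult_right_mono zero_le_power less_imp_le)
  also have "\<dots> = (moment A (4 * T) * q ^ (2 * T ^ 2)) * q ^ (2 * T ^ 2)"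
    by (simp add: power_add[symmetric])
  also have "\<dots> \<le> 1 * q ^ (2 * T ^ 2)"
    using hyp[OF T(2)] q by (intro mult_right_mono) auto
  finally have aq: "a \<le> q ^ (2 * T ^ 2)" by simp
  have "(Pf q E pt)\<^sup>2 * a \<le> (q powr X)\<^sup>2 * q ^ (2 * T ^ 2)"
    using P aq a0 by (intro mult_mono) auto
  also have "\<dots> = q powr (2 * X + 2 * real T ^ 2)"
    using q by (simp add: powr_add powr_realpow[symmetric] powr_powr[symmetric] power2_eq_square
        powr_mult_base mult.commute)
  also have "\<dots> \<le> q powr (real T)"
  proof (intro powr_mono')
    show "real T \<le> 2 * X + 2 * real T ^ 2" unfolding X_def
      using int_ineq[of "real m" "real T"] m T by (simp add: add.commute)
  qed (use q in auto)
  also have "\<dots> = q ^ T" using q by (simp add: powr_realpow)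
  finally show ?thesis by (simp add: pt_def a_def)
qed



lemma Lam_countable: "countable (Lam q)" unfolding Lam_def by simp

lemma countable_sets_borel: "countable (S :: real set) \<Longrightarrow> S \<in> sets borel"
  by (rule sets.countable) auto

lemma geom_ennreal:
  assumes q: "0 < q" "q < 1"
  shows "(\<Sum>t. ennreal (q ^ (t + k))) = ennreal (q ^ k / (1 - q))"
proof -
  have s: "summable (\<lambda>t. q ^ (t + k))"
    using q by (simp add: power_add summable_mult2 summable_geometric)
  have "(\<Sum>t. q ^ (t + k)) = q ^ k / (1 - q)"
    using q by (simp add: power_add suminf_mult2[symmetric] summable_geometric suminf_geometric field_simps)
  thus ?thesis using s q by (subst suminf_ennreal2) auto
qed

lemma est:
  fixes A :: "real measure" and q :: real and m t0 :: nat and E :: "int set" and Z :: "real set"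
  assumes q: "0 < q" "q < 1"
  and sA: "sets A = sets borel" and int: "\<And>n. integrable A (\<lambda>x. x ^ n)" and AEL: "AE x in A. x \<in> Lam q"
  and hyp: "\<And>t. t \<ge> t0 \<Longrightarrow> moment A (4 * t) * q ^ (2 * t^2) \<le> 1"
  and m: "m \<ge> 1" "4 * m + 1 \<ge> t0"
  and E: "E \<subseteq> {- int m..4 * int m}"
  and Z: "Z \<subseteq> Lam q" "\<And>l. - 4 * int m \<le> l \<Longrightarrow> l \<le> int m \<Longrightarrow> q powi l \<notin> Z \<Longrightarrow> Pf q E (q powi l) = 0"
  shows "(\<integral>\<^sup>+x. ennreal ((Pf q E x)\<^sup>2) \<partial>A) \<le> (\<integral>\<^sup>+x. ennreal ((Pf q E x)\<^sup>2) * indicator Z x \<partial>A)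
           + emeasure A {x. 0 < x \<and> x \<le> q powi (int m + 1)} + ennreal (q ^ (4 * m + 1) / (1 - q))"
proof -
  have fin: "finite_measure A" by (rule finite_of_moments[OF int])
  define f where "f x = ennreal ((Pf q E x)\<^sup>2)" for x
  define pt where "pt t = q powi (- int (t + (4 * m + 1)))" for t :: nat
  define Sm where "Sm = {x. 0 < x \<and> x \<le> q powi (int m + 1)}"
  have "f \<in> borel_measurable borel" unfolding f_def by measurable
  hence fm[measurable]: "f \<in> borel_measurable A" by (subst measurable_cong_sets[OF sA refl])
  have "Z \<in> sets borel" by (rule countable_sets_borel, rule countable_subset[OF Z(1) Lam_countable])
  hence Zs[measurable]: "Z \<in> sets A" unfolding sA .
  have "Sm \<in> sets borel" unfolding Sm_def by measurable
  hence Sms[measurable]: "Sm \<in> sets A" unfolding sA .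
  have pts[measurable]: "{pt t} \<in> sets A" for t unfolding sA by simp
  have "Lam q \<in> sets borel" by (rule countable_sets_borel, rule Lam_countable)
  hence Lams[measurable]: "Lam q \<in> sets A" unfolding sA .
  have step1: "(\<integral>\<^sup>+x. f x \<partial>A) = (\<integral>\<^sup>+x. f x * indicator (Lam q) x \<partial>A)"
    by (intro nn_integral_cong_AE) (use AEL in \<open>auto simp: indicator_def\<close>)
  have step2: "f x * indicator (Lam q) x \<le> f x * indicator Z x + indicator Sm x + (\<Sum>t. f x * indicator {pt t} x)"
    for x
  proof (cases "x \<in> Lam q")
    case False thus ?thesis by simp
  next
    case True
    then obtain l where x: "x = q powi l" unfolding Lam_def by auto
    consider "l \<ge> int m + 1" | "- 4 * int m \<le> l \<and> l \<le> int m" | "l < - 4 * int m" by linarith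
    thus ?thesis
    proof cases
      case 1
      have "0 < x" using x q by simp
      moreover have "x \<le> q powi (int m + 1)" using x q 1 power_int_decreasing[of "int m + 1" l q] by auto
      ultimately have "x \<in> Sm" by (simp add: Sm_def)
      moreover have "f x \<le> 1"
      proof -
        have "0 \<le> Pf q E x" "Pf q E x \<le> 1" using Pf_small[OF q E 1] x by auto
        hence "(Pf q E x)\<^sup>2 \<le> 1" by (simp add: power_le_one)
        thus ?thesis by (simp add: f_def)
      qed
      ultimately show ?thesis using True by (simp add: add_increasing2 add_increasing)
    next
      case 2
      show ?thesis
      proof (cases "x \<in> Z")
        case True
        have *: "f x * indicator (Lam q) x = f x * indicator Z x" using True \<open>x \<in> Lam q\<close> by simp
        show ?thesis unfolding * add.assoc by (rule add_increasing2) auto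
      next
        case False
        hence "Pf q E x = 0" using Z(2)[of l] 2 x by auto
        thus ?thesis by (simp add: f_def)
      qed
    next
      case 3
      define t where "t = nat (- l - 4 * int m - 1)"
      have "x = pt t" unfolding pt_def t_def x using 3 by (simp add: algebra_simps)
      hence "f x * indicator (Lam q) x \<le> (\<Sum>s\<in>{t}. f x * indicator {pt s} x)"
        using \<open>x \<in> Lam q\<close> by simp
      also have "\<dots> \<le> (\<Sum>s. f x * indicator {pt s} x)" by (intro sum_le_suminf) auto
      finally show ?thesis by (simp add: add_increasing)
    qed
  qed
  have "(\<integral>\<^sup>+x. f x \<partial>A) \<le> (\<integral>\<^sup>+x. f x * indicator Z x + indicator Sm x + (\<Sum>t. f x * indicator {pt t} x) \<partial>A)"
    unfolding step1 by (intro nn_integral_mono step2)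
  also have "\<dots> = (\<integral>\<^sup>+x. f x * indicator Z x + indicator Sm x \<partial>A) + (\<integral>\<^sup>+x. (\<Sum>t. f x * indicator {pt t} x) \<partial>A)"
    by (rule nn_integral_add) (measurable, measurable)
  also have "(\<integral>\<^sup>+x. f x * indicator Z x + indicator Sm x \<partial>A) = (\<integral>\<^sup>+x. f x * indicator Z x \<partial>A) + (\<integral>\<^sup>+x. indicator Sm x \<partial>A)"
    by (rule nn_integral_add) (measurable, measurable)
  also have "(\<integral>\<^sup>+x. indicator Sm x \<partial>A) = emeasure A Sm" using Sms by simp
  also have "(\<integral>\<^sup>+x. (\<Sum>t. f x * indicator {pt t} x) \<partial>A) = (\<Sum>t. \<integral>\<^sup>+x. f x * indicator {pt t} x \<partial>A)"
    by (rule nn_integral_suminf) measurable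
  also have "(\<Sum>t. \<integral>\<^sup>+x. f x * indicator {pt t} x \<partial>A) \<le> (\<Sum>t. ennreal (q ^ (t + (4 * m + 1))))"
  proof (intro suminf_le allI)
    fix t
    have "(\<integral>\<^sup>+x. f x * indicator {pt t} x \<partial>A) = f (pt t) * emeasure A {pt t}" by simp
    also have "\<dots> = ennreal ((Pf q E (pt t))\<^sup>2 * measure A {pt t})"
      using fin by (simp add: f_def finite_measure.emeasure_eq_measure ennreal_mult)
    also have "\<dots> \<le> ennreal (q ^ (t + (4 * m + 1)))"
      unfolding pt_def
      by (intro ennreal_leI big_term[OF q fin sA int hyp m(1) _ _ E]) (use m in auto)
    finally show "(\<integral>\<^sup>+x. f x * indicator {pt t} x \<partial>A) \<le> ennreal (q ^ (t + (4 * m + 1)))" .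
  qed auto
  also have "(\<Sum>t. ennreal (q ^ (t + (4 * m + 1)))) = ennreal (q ^ (4 * m + 1) / (1 - q))"
    by (rule geom_ennreal[OF q])
  finally show ?thesis by (simp add: f_def Sm_def add_mono)
qed



definition Sm :: "real \<Rightarrow> nat \<Rightarrow> real set" where
  "Sm q m = {x. 0 < x \<and> x \<le> q powi (int m + 1)}"

lemma Sm_sets: "Sm q m \<in> sets borel" unfolding Sm_def by measurable

lemma Sm_lim:
  assumes q: "0 < q" "q < 1" and fin: "finite_measure A" and sA: "sets A = sets borel"
  shows "(\<lambda>m. measure A (Sm q m)) \<longlonglongrightarrow> 0"
proof -
  have "range (Sm q) \<subseteq> sets A" using sA Sm_sets by auto
  moreover have "decseq (Sm q)"
  proof (rule decseq_SucI)
    fix m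
    have "q powi (int (Suc m) + 1) \<le> q powi (int m + 1)" using q by (intro power_int_decreasing) auto
    thus "Sm q (Suc m) \<subseteq> Sm q m" unfolding Sm_def by auto
  qed
  ultimately have "(\<lambda>m. measure A (Sm q m)) \<longlonglongrightarrow> measure A (\<Inter>m. Sm q m)"
    by (rule finite_measure.finite_Lim_measure_decseq[OF fin])
  moreover have "(\<Inter>m. Sm q m) = {}"
  proof (rule ccontr)
    assume "(\<Inter>m. Sm q m) \<noteq> {}"
    then obtain x where x: "\<And>m. x \<in> Sm q m" by blast
    hence xp: "0 < x" by (simp add: Sm_def)
    have "(\<lambda>n. q ^ n) \<longlonglongrightarrow> 0" using q by (intro LIMSEQ_power_zero) auto
    from order_tendstoD(2)[OF this xp] obtain n where "q ^ n < x"
      by (auto simp: eventually_sequentially)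
    moreover have "q ^ (n + 1) \<le> q ^ n" using q by (intro power_decreasing) auto
    moreover have "x \<le> q powi (int n + 1)" using x[of n] by (simp add: Sm_def)
    moreover have "q powi (int n + 1) = q ^ (n + 1)"
      by (metis of_nat_Suc power_int_of_nat Suc_eq_plus1 add.commute)
    ultimately show False by simp
  qed
  ultimately show ?thesis by simp
qed

lemma r_lim:
  assumes q: "0 < q" "q < 1" and fin: "finite_measure A" and sA: "sets A = sets borel"
  shows "(\<lambda>m. measure A (Sm q m) + q ^ (4 * m + 1) / (1 - q)) \<longlonglongrightarrow> 0"
proof -
  have "(\<lambda>n. q ^ n) \<longlonglongrightarrow> 0" using q by (intro LIMSEQ_power_zero) auto
  hence "((\<lambda>n. q ^ n) \<circ> (\<lambda>m. 4 * m + 1)) \<longlonglongrightarrow> 0"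
    by (rule LIMSEQ_subseq_LIMSEQ) (auto simp: strict_mono_def)
  hence "(\<lambda>m. q ^ (4 * m + 1) / (1 - q)) \<longlonglongrightarrow> 0 / (1 - q)"
    using q by (intro tendsto_divide) (auto simp: o_def)
  from tendsto_add[OF Sm_lim[OF q fin sA] this] show ?thesis by simp
qed

lemma Pf_zero: "finite E \<Longrightarrow> e \<in> E \<Longrightarrow> 0 < q \<Longrightarrow> Pf q E (q powi (- e)) = 0"
  unfolding Pf_def by (rule prod_zero) (auto simp: power_int_add[symmetric] intro!: bexI[of _ e])

lemma est':
  fixes A :: "real measure" and q :: real and m t0 :: nat and E :: "int set" and Z :: "real set"
  assumes q: "0 < q" "q < 1"
  and sA: "sets A = sets borel" and int: "\<And>n. integrable A (\<lambda>x. x ^ n)" and AEL: "AE x in A. x \<in> Lam q"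
  and hyp: "\<And>t. t \<ge> t0 \<Longrightarrow> moment A (4 * t) * q ^ (2 * t^2) \<le> 1"
  and m: "m \<ge> 1" "4 * m + 1 \<ge> t0"
  and E: "E \<subseteq> {- int m..4 * int m}"
  and Z: "Z \<subseteq> Lam q" "\<And>l. - 4 * int m \<le> l \<Longrightarrow> l \<le> int m \<Longrightarrow> q powi l \<notin> Z \<Longrightarrow> Pf q E (q powi l) = 0"
  shows "(\<integral>\<^sup>+x. ennreal ((Pf q E x)\<^sup>2) \<partial>A) \<le> (\<integral>\<^sup>+x. ennreal ((Pf q E x)\<^sup>2) * indicator Z x \<partial>A)
           + ennreal (measure A (Sm q m) + q ^ (4 * m + 1) / (1 - q))"
proof -
  have fin: "finite_measure A" by (rule finite_of_moments[OF int])
  have "emeasure A {x. 0 < x \<and> x \<le> q powi (int m + 1)} = ennreal (measure A (Sm q m))"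
    using fin by (simp add: finite_measure.emeasure_eq_measure Sm_def)
  moreover have "0 \<le> q ^ (4 * m + 1) / (1 - q)" using q by simp
  ultimately show ?thesis
    using est[OF q sA int AEL hyp m E Z] by (simp add: add.assoc)
qed



lemma Pf_zero_E0:
  assumes "0 < q" "- 4 * int m \<le> l" "l \<le> int m" "- l \<in> E" "finite E"
  shows "Pf q E (q powi l) = 0"
  using Pf_zero[OF assms(5) assms(4) assms(1)] by simp

lemma support:
  fixes A B :: "real measure" and q :: real and t0 :: nat
  assumes q: "0 < q" "q < 1"
   and sA: "sets A = sets borel" and intA: "\<And>n. integrable A (\<lambda>x. x ^ n)" and AEL: "AE x in A. x \<in> Lam q"
   and hyp: "\<And>t. t \<ge> t0 \<Longrightarrow> moment A (4 * t) * q ^ (2 * t ^ 2) \<le> 1"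
   and sB: "sets B = sets borel" and intB: "\<And>n. integrable B (\<lambda>x. x ^ n)"
   and mom: "\<And>n. moment A n = moment B n"
  shows "AE x in B. x \<in> Lam q"
proof -
  have finA: "finite_measure A" by (rule finite_of_moments[OF intA])
  define G where "G m x = Pf q {- int m..4 * int m} x" for m x
  define r where "r m = measure A (Sm q m) + q ^ (4 * m + 1) / (1 - q)" for m
  have rlim: "(\<lambda>m. ennreal (r m)) \<longlonglongrightarrow> 0"
    using tendsto_ennrealI[OF r_lim[OF q finA sA]] unfolding r_def by simp
  have Gm: "(\<lambda>x. ennreal ((G m x)\<^sup>2)) \<in> borel_measurable B" for m
    unfolding G_def by (subst measurable_cong_sets[OF sB refl]) measurable
  have bound: "(\<integral>\<^sup>+x. ennreal ((G m x)\<^sup>2) \<partial>B) \<le> ennreal (r m)" if m: "m \<ge> max 1 t0" for m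
  proof -
    have "(\<integral>\<^sup>+x. ennreal ((G m x)\<^sup>2) \<partial>B) = (\<integral>\<^sup>+x. ennreal ((G m x)\<^sup>2) \<partial>A)"
      unfolding G_def using nn_integral_Pf2_eq[OF intA intB mom] by simp
    also have "\<dots> \<le> (\<integral>\<^sup>+x. ennreal ((G m x)\<^sup>2) * indicator {} x \<partial>A) + ennreal (r m)"
      unfolding G_def r_def
    proof (rule est'[OF q sA intA AEL hyp])
      fix l assume "- 4 * int m \<le> l" "l \<le> int m"
      thus "Pf q {- int m..4 * int m} (q powi l) = 0" using q by (intro Pf_zero_E0) auto
    qed (use m in auto)
    finally show ?thesis by simp
  qed
  define C where "C K = {x. \<forall>m. K \<le> m \<longrightarrow> 1 / (real K + 1) \<le> (G m x)\<^sup>2}" for K :: nat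
  have Cs: "C K \<in> sets B" for K unfolding sB C_def G_def by measurable
  have C0: "emeasure B (C K) = 0" for K
  proof -
    have le: "emeasure B (C K) \<le> ennreal (real K + 1) * ennreal (r m)" if m: "m \<ge> max K (max 1 t0)" for m
    proof -
      have "emeasure B (C K) = (\<integral>\<^sup>+x. indicator (C K) x \<partial>B)" using Cs by simp
      also have "\<dots> \<le> (\<integral>\<^sup>+x. ennreal (real K + 1) * ennreal ((G m x)\<^sup>2) \<partial>B)"
      proof (rule nn_integral_mono)
        fix x show "indicator (C K) x \<le> ennreal (real K + 1) * ennreal ((G m x)\<^sup>2)"
        proof (cases "x \<in> C K")
          case True
          hence "1 / (real K + 1) \<le> (G m x)\<^sup>2" using m by (auto simp: C_def)
          hence "1 \<le> (real K + 1) * (G m x)\<^sup>2" by (simp add: field_simps)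
          hence "ennreal 1 \<le> ennreal ((real K + 1) * (G m x)\<^sup>2)" by (rule ennreal_leI)
          thus ?thesis using True by (simp add: ennreal_mult)
        qed simp
      qed
      also have "\<dots> = ennreal (real K + 1) * (\<integral>\<^sup>+x. ennreal ((G m x)\<^sup>2) \<partial>B)"
        by (rule nn_integral_cmult[OF Gm])
      also have "\<dots> \<le> ennreal (real K + 1) * ennreal (r m)"
        using bound m by (intro mult_left_mono) auto
      finally show ?thesis .
    qed
    have "(\<lambda>m. ennreal (real K + 1) * ennreal (r m)) \<longlonglongrightarrow> ennreal (real K + 1) * 0"
      by (intro ennreal_tendsto_cmult rlim) auto
    moreover have "eventually (\<lambda>m. emeasure B (C K) \<le> ennreal (real K + 1) * ennreal (r m)) sequentially"
      unfolding eventually_sequentially by (rule exI[of _ "max K (max 1 t0)"]) (use le in blast)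
    ultimately have "emeasure B (C K) \<le> ennreal (real K + 1) * 0"
      by (rule tendsto_le[OF sequentially_bot _ tendsto_const])
    thus ?thesis by simp
  qed
  have "AE x in B. x \<notin> C K" for K
    by (rule AE_I'[of "C K"]) (use C0 Cs in auto)
  hence "AE x in B. \<forall>K. x \<notin> C K" by (simp add: AE_all_countable)
  thus ?thesis
  proof (rule AE_mp, intro AE_I2 impI)
    fix x assume nC: "\<forall>K. x \<notin> C K"
    show "x \<in> Lam q"
    proof (rule ccontr)
      assume "x \<notin> Lam q"
      then obtain c where c: "c > 0" "\<And>E. finite E \<Longrightarrow> c \<le> \<bar>Pf q E x\<bar>" using LB[OF q] by blast
      obtain K :: nat where K: "1 / c\<^sup>2 < real K" using reals_Archimedean2 by blast
      have "1 / (real K + 1) \<le> c\<^sup>2"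
      proof -
        have "1 / c\<^sup>2 < real K + 1" using K by simp
        thus ?thesis using c by (simp add: field_simps)
      qed
      moreover have "c\<^sup>2 \<le> (G m x)\<^sup>2" for m
      proof -
        have "c \<le> \<bar>G m x\<bar>" unfolding G_def by (rule c(2)) simp
        hence "c\<^sup>2 \<le> \<bar>G m x\<bar>\<^sup>2" using c by (intro power_mono) auto
        thus ?thesis by simp
      qed
      ultimately have "x \<in> C K" unfolding C_def by (auto intro: order_trans)
      thus False using nC by blast
    qed
  qed
qed



lemma singleton_le:
  fixes A B :: "real measure" and q :: real and t0 :: nat and j :: int
  assumes q: "0 < q" "q < 1"
   and sA: "sets A = sets borel" and intA: "\<And>n. integrable A (\<lambda>x. x ^ n)" and AEL: "AE x in A. x \<in> Lam q"
   and hyp: "\<And>t. t \<ge> t0 \<Longrightarrow> moment A (4 * t) * q ^ (2 * t ^ 2) \<le> 1"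
   and sB: "sets B = sets borel" and intB: "\<And>n. integrable B (\<lambda>x. x ^ n)"
   and mom: "\<And>n. moment A n = moment B n"
  shows "emeasure B {q powi j} \<le> emeasure A {q powi j}"
proof -
  have finA: "finite_measure A" by (rule finite_of_moments[OF intA])
  have finB: "finite_measure B" by (rule finite_of_moments[OF intB])
  define pt where "pt = q powi j"
  define r where "r m = measure A (Sm q m) + q ^ (4 * m + 1) / (1 - q)" for m
  define c0 where "c0 = exp (- q / ((1 - q) * (1 - q))) * exp (- q / ((1 - q) * (1 - q)))"
  have c0: "0 < c0" by (simp add: c0_def)
  define a where "a = measure A {pt}"
  define b where "b = measure B {pt}"
  have r0: "0 \<le> r m" for m using q by (simp add: r_def)
  have pts: "{pt} \<in> sets A" "{pt} \<in> sets B" using sA sB by auto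
  have key: "b \<le> a + r m / c0\<^sup>2" if m: "m \<ge> max (max 1 t0) (nat \<bar>j\<bar>)" for m
  proof -
    define E where "E = {- int m..4 * int m} - {- j}"
    define h where "h = (Pf q E pt)\<^sup>2"
    have "c0 \<le> \<bar>Pf q E pt\<bar>" unfolding c0_def pt_def E_def by (rule LH[OF q]) auto
    hence hc: "c0\<^sup>2 \<le> h" unfolding h_def using c0 by (metis power2_abs power_mono less_imp_le)
    have eqB: "(\<integral>\<^sup>+x. ennreal ((Pf q E x)\<^sup>2) * indicator {pt} x \<partial>B) = ennreal h * emeasure B {pt}"
      using pts by (simp add: h_def)
    have "ennreal h * emeasure B {pt} = (\<integral>\<^sup>+x. ennreal ((Pf q E x)\<^sup>2) * indicator {pt} x \<partial>B)"
      using eqB by simp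
    also have "\<dots> \<le> (\<integral>\<^sup>+x. ennreal ((Pf q E x)\<^sup>2) \<partial>B)"
      by (intro nn_integral_mono) (auto simp: indicator_def)
    also have "\<dots> = (\<integral>\<^sup>+x. ennreal ((Pf q E x)\<^sup>2) \<partial>A)"
      using nn_integral_Pf2_eq[OF intA intB mom] by simp
    also have "\<dots> \<le> (\<integral>\<^sup>+x. ennreal ((Pf q E x)\<^sup>2) * indicator {pt} x \<partial>A) + ennreal (r m)"
      unfolding r_def
    proof (rule est'[OF q sA intA AEL hyp])
      fix l assume l: "- 4 * int m \<le> l" "l \<le> int m" "q powi l \<notin> {pt}"
      hence "l \<noteq> j" by (auto simp: pt_def)
      thus "Pf q E (q powi l) = 0" using q l by (intro Pf_zero_E0) (auto simp: E_def)
    qed (use m in \<open>auto simp: E_def pt_def Lam_def\<close>)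
    also have "(\<integral>\<^sup>+x. ennreal ((Pf q E x)\<^sup>2) * indicator {pt} x \<partial>A) = ennreal h * emeasure A {pt}"
      using pts by (simp add: h_def)
    finally have "ennreal h * emeasure B {pt} \<le> ennreal h * emeasure A {pt} + ennreal (r m)" .
    hence "ennreal (h * b) \<le> ennreal (h * a + r m)"
      using finA finB r0 by (simp add: finite_measure.emeasure_eq_measure a_def b_def h_def ennreal_mult)
    hence hb: "h * b \<le> h * a + r m" using r0 by (subst (asm) ennreal_le_iff) (auto simp: h_def a_def)
    have hp: "0 < h" using hc c0 by (meson less_le_trans zero_less_power)
    have "b \<le> a + r m / h" using hb hp by (simp add: field_simps mult.commute)
    also have "r m / h \<le> r m / c0\<^sup>2" using hc c0 r0 hp by (intro divide_left_mono) auto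
    finally show ?thesis by simp
  qed
  have "(\<lambda>m. a + r m / c0\<^sup>2) \<longlonglongrightarrow> a + 0 / c0\<^sup>2"
    unfolding r_def by (intro tendsto_add tendsto_const tendsto_divide r_lim[OF q finA sA]) (use c0 in auto)
  moreover have "eventually (\<lambda>m. b \<le> a + r m / c0\<^sup>2) sequentially"
    unfolding eventually_sequentially by (rule exI[of _ "max (max 1 t0) (nat \<bar>j\<bar>)"]) (use key in blast)
  ultimately have "b \<le> a + 0 / c0\<^sup>2" by (rule tendsto_le[OF sequentially_bot _ tendsto_const])
  hence "b \<le> a" by simp
  thus ?thesis using finA finB
    by (simp add: finite_measure.emeasure_eq_measure a_def b_def pt_def)
qed



lemma eq_from_support:
  fixes A B :: "real measure"
  assumes sA: "sets A = sets borel" and sB: "sets B = sets borel"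
    and AEA: "AE x in A. x \<in> Lam q" and AEB: "AE x in B. x \<in> Lam q"
    and pts: "\<And>j. emeasure B {q powi j} = emeasure A {q powi j}"
  shows "B = A"
proof (rule measure_eqI)
  show "sets B = sets A" using sA sB by simp
  fix X assume X: "X \<in> sets B"
  have Lb: "Lam q \<in> sets borel" by (rule countable_sets_borel, rule Lam_countable)
  have cX: "countable (X \<inter> Lam q)" using Lam_countable by (rule countable_subset[rotated]) auto
  have XA: "X \<in> sets A" using X sA sB by simp
  have "emeasure B X = emeasure B (X \<inter> Lam q)"
    by (rule emeasure_eq_AE) (use AEB X Lb sB in auto)
  also have "\<dots> = (\<integral>\<^sup>+x. emeasure B {x} \<partial>count_space (X \<inter> Lam q))"
    by (rule emeasure_countable_singleton[OF _ cX]) (use sB in auto)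
  also have "\<dots> = (\<integral>\<^sup>+x. emeasure A {x} \<partial>count_space (X \<inter> Lam q))"
    by (rule nn_integral_cong) (auto simp: Lam_def pts)
  also have "\<dots> = emeasure A (X \<inter> Lam q)"
    by (rule emeasure_countable_singleton[symmetric, OF _ cX]) (use sA in auto)
  also have "\<dots> = emeasure A X"
    by (rule emeasure_eq_AE) (use AEA XA Lb sA in auto)
  finally show "emeasure B X = emeasure A X" .
qed

theorem theorem2:
  fixes q v :: real and \<omega> :: "real \<Rightarrow> real"
  assumes "0 < q" "q < 1" "v > -1"
    and "\<And>x. \<omega> (- x) = \<omega> x"
    and "\<And>n::int. \<omega> (q powi n) \<noteq> 0"
    and "\<And>n. integrable (q_measure q v \<omega>) (\<lambda>x. x ^ n)"
    and "(\<lambda>n. q powr (real n / 4) * (moment (q_measure q v \<omega>) (2 * n)) powr (1 / real (2 * n)))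
           \<longlonglongrightarrow> 0"
  shows "determinate (q_measure q v \<omega>)"
proof -
  define M where "M = q_measure q v \<omega>"
  have q: "0 < q" "q < 1" using assms by auto
  have sM: "sets M = sets borel" by (simp add: M_def q_measure_def)
  have intM: "\<And>n. integrable M (\<lambda>x. x ^ n)" using assms(6) by (simp add: M_def)
  have AEM: "AE x in M. x \<in> Lam q"
  proof -
    have Lb: "Lam q \<in> sets borel" by (rule countable_sets_borel, rule Lam_countable)
    show ?thesis unfolding M_def q_measure_def
      by (subst AE_distr_iff) (use Lb in \<open>auto simp: Lam_def\<close>)
  qed
  obtain N0 where N0: "\<And>n. n \<ge> N0 \<Longrightarrow>
      q powr (real n / 4) * (moment M (2 * n)) powr (1 / real (2 * n)) < 1"
    using order_tendstoD(2)[OF assms(7), of 1] by (auto simp: eventually_sequentially M_def)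
  define t0 where "t0 = max N0 1"
  have hypM: "moment M (4 * t) * q ^ (2 * t ^ 2) \<le> 1" if t: "t \<ge> t0" for t
  proof -
    define s where "s = moment M (4 * t)"
    have ev: "0 \<le> x ^ (4 * t)" for x :: real
    proof -
      have "x ^ (4 * t) = (x ^ 2) ^ (2 * t)" by (simp add: power_mult[symmetric])
      thus ?thesis by simp
    qed
    have s0: "0 \<le> s" unfolding s_def moment_def
      by (intro Bochner_Integration.integral_nonneg ev)
    have t1: "t \<ge> 1" "2 * t \<ge> N0" using t by (auto simp: t0_def)
    have "q powr (real (2 * t) / 4) * (moment M (2 * (2 * t))) powr (1 / real (2 * (2 * t))) < 1"
      by (rule N0[OF t1(2)])
    hence lt: "q powr (real t / 2) * s powr (1 / (4 * real t)) < 1" by (simp add: s_def)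
    have qt: "0 < q powr (real t / 2)" using q by simp
    have "s powr (1 / (4 * real t)) \<le> q powr (- (real t / 2))"
    proof -
      have "s powr (1 / (4 * real t)) < 1 / q powr (real t / 2)" using lt qt by (simp add: field_simps mult.commute)
      thus ?thesis using q by (simp add: powr_minus_divide)
    qed
    hence "(s powr (1 / (4 * real t))) powr (4 * real t) \<le> (q powr (- (real t / 2))) powr (4 * real t)"
      by (intro powr_mono2) auto
    moreover have "(s powr (1 / (4 * real t))) powr (4 * real t) = s"
      using t1 s0 by (simp add: powr_powr)
    moreover have "(q powr (- (real t / 2))) powr (4 * real t) = q powr (- (2 * real t ^ 2))"
      by (simp add: powr_powr power2_eq_square)
    ultimately have "s \<le> q powr (- (2 * real t ^ 2))" by simp
    hence "s * q ^ (2 * t ^ 2) \<le> q powr (- (2 * real t ^ 2)) * q ^ (2 * t ^ 2)"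
      using q by (intro mult_right_mono) auto
    also have "\<dots> = 1"
      using q by (simp add: powr_realpow[symmetric] powr_add[symmetric])
    finally show ?thesis by (simp add: s_def)
  qed
  have "determinate M"
    unfolding determinate_def has_all_moments_def
  proof (intro conjI)
    show "sets M = sets borel" "\<forall>n. integrable M (\<lambda>x. x ^ n)" using sM intM by auto
  next
    show "\<forall>N. (sets N = sets borel \<and> (\<forall>n. integrable N (\<lambda>x. x ^ n))) \<and> (\<forall>n. moment N n = moment M n) \<longrightarrow> N = M"
    proof (intro allI impI)
    fix N assume N: "(sets N = sets borel \<and> (\<forall>n. integrable N (\<lambda>x. x ^ n))) \<and> (\<forall>n. moment N n = moment M n)"
    have sN: "sets N = sets borel" and intN: "\<And>n. integrable N (\<lambda>x. x ^ n)"
      and momN: "\<And>n. moment M n = moment N n" using N by auto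
    have hypN: "moment N (4 * t) * q ^ (2 * t ^ 2) \<le> 1" if "t \<ge> t0" for t
      using hypM[OF that] momN by simp
    have AEN: "AE x in N. x \<in> Lam q"
      by (rule support[OF q sM intM AEM hypM sN intN momN])
    have "emeasure N {q powi j} = emeasure M {q powi j}" for j
    proof (rule antisym)
      show "emeasure N {q powi j} \<le> emeasure M {q powi j}"
        by (rule singleton_le[OF q sM intM AEM hypM sN intN momN])
      show "emeasure M {q powi j} \<le> emeasure N {q powi j}"
        by (rule singleton_le[OF q sN intN AEN hypN sM intM]) (use N in auto)
    qed
    thus "N = M" by (rule eq_from_support[OF sM sN AEM AEN])
    qed
  qed
  thus ?thesis by (simp add: M_def)
qed

end
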